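(* There exist five nonzero vectors $\{\phi_i\}_{i=1}^5$ in $\mathbb R^3$ which fail to do phase retrieval, but whose induced hyperplanes $\{\phi_i^\perp\}_{i=1}^5$ do phase retrieval on $\mathbb R^3$.
   Context: A family of vectors $\{\phi_i\}$ in $\mathbb R^d$ does phase retrieval if $|\langle x,\phi_i\rangle|=|\langle y,\phi_i\rangle|$ for all $i$ implies $x=\pm y$. A family of subspaces $\{W_i\}$ with orthogonal projections $P_i$ does phase retrieval if $\|P_ix\|=\|P_iy\|$ for all $i$ implies $x=\pm y$. Here $\phi_i^\perp=\{x\in\mathbb R^3:\langle x,\phi_i\rangle=0\}$. *)

theory Defs
  imports "HOL-Analysis.Analysis"
begin

definition vec_phase_retrieval :: "'i set \<Rightarrow> ('i \<Rightarrow> 'a::real_inner) \<Rightarrow> bool" where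
  "vec_phase_retrieval I \<phi> \<longleftrightarrow>
     (\<forall>x y. (\<forall>i\<in>I. \<bar>x \<bullet> \<phi> i\<bar> = \<bar>y \<bullet> \<phi> i\<bar>) \<longrightarrow> x = y \<or> x = - y)"

definition orth_proj :: "'a::euclidean_space set \<Rightarrow> 'a \<Rightarrow> 'a" where
  "orth_proj W x = (THE p. p \<in> W \<and> (\<forall>w\<in>W. (x - p) \<bullet> w = 0))"

definition subspace_phase_retrieval :: "'i set \<Rightarrow> ('i \<Rightarrow> 'a::euclidean_space set) \<Rightarrow> bool" where
  "subspace_phase_retrieval I W \<longleftrightarrow>
     (\<forall>x y. (\<forall>i\<in>I. norm (orth_proj (W i) x) = norm (orth_proj (W i) y)) \<longrightarrow> x = y \<or> x = - y)"

definition perp_hyperplane :: "'a::real_inner \<Rightarrow> 'a set" where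
  "perp_hyperplane v = {x. x \<bullet> v = 0}"

end

theory Submission
  imports Defs
begin

lemma core:
  fixes x1 x2 x3 y1 y2 y3 :: real
  assumes e3: "(x1^2+x2^2+x3^2) - x3^2 = (y1^2+y2^2+y3^2) - y3^2"
  and e1: "(x1^2+x2^2+x3^2) - (2*x1+x2)^2/5 = (y1^2+y2^2+y3^2) - (2*y1+y2)^2/5"
  and e2: "(x1^2+x2^2+x3^2) - (2*x1-x2)^2/5 = (y1^2+y2^2+y3^2) - (2*y1-y2)^2/5"
  and e4: "(x1^2+x2^2+x3^2) - (2*x1+x2+x3)^2/6 = (y1^2+y2^2+y3^2) - (2*y1+y2+y3)^2/6"
  and e5: "(x1^2+x2^2+x3^2) - (2*x1-x2+x3)^2/6 = (y1^2+y2^2+y3^2) - (2*y1-y2+y3)^2/6"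
  shows "(x1=y1 \<and> x2=y2 \<and> x3=y3) \<or> (x1 = -y1 \<and> x2 = -y2 \<and> x3 = -y3)"
proof -
  define d11 where "d11 = x1*x1 - y1*y1"
  define d22 where "d22 = x2*x2 - y2*y2"
  define d33 where "d33 = x3*x3 - y3*y3"
  define d12 where "d12 = x1*x2 - y1*y2"
  define d13 where "d13 = x1*x3 - y1*y3"
  define d23 where "d23 = x2*x3 - y2*y3"
  have f3: "d11 + d22 = 0" using e3 unfolding d11_def d22_def by (simp add: power2_eq_square algebra_simps)
  have f1: "5*(d11+d22+d33) = 4*d11+d22+4*d12" using e1 unfolding d11_def d22_def d33_def d12_def by (simp add: power2_eq_square field_simps) 
  have f2: "5*(d11+d22+d33) = 4*d11+d22-4*d12" using e2 unfolding d11_def d22_def d33_def d12_def by (simp add: power2_eq_square field_simps) 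
  have f4: "6*(d11+d22+d33) = 4*d11+d22+d33+4*d12+4*d13+2*d23" using e4 unfolding d11_def d22_def d33_def d12_def d13_def d23_def by (simp add: power2_eq_square field_simps) 
  have f5: "6*(d11+d22+d33) = 4*d11+d22+d33-4*d12+4*d13-2*d23" using e5 unfolding d11_def d22_def d33_def d12_def d13_def d23_def by (simp add: power2_eq_square field_simps) 
  have g1: "d12 = 0" "d23 = 0" "d22 = - d11" using f1 f2 f3 f4 f5 by auto
  have g2: "5*d33 = 3*d11" using f1 g1 by (simp add: algebra_simps)
  have g3: "d13 = 0" using f4 f5 g1 g2 by (simp add: algebra_simps)
  note g = g1 g2 g3
  have det: "d11*d22*d33 + 2*d12*d23*d13 - d11*d23^2 - d22*d13^2 - d33*d12^2 = 0"
    unfolding d11_def d22_def d33_def d12_def d13_def d23_def by algebra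
  have "d11^3 = 0" using det g by (simp add: power3_eq_cube algebra_simps) (smt (verit))
  hence "d11 = 0" by simp
  with g have z: "d11 = 0" "d22 = 0" "d33 = 0" "d12 = 0" "d13 = 0" "d23 = 0" by auto
  hence s: "x1*x1 = y1*y1" "x2*x2 = y2*y2" "x3*x3=y3*y3" "x1*x2=y1*y2" "x1*x3=y1*y3" "x2*x3=y2*y3"
    unfolding d11_def d22_def d33_def d12_def d13_def d23_def by auto
  show ?thesis
  proof (cases "x1 = 0")
    case False
    from s(1) have "y1 = x1 \<or> y1 = -x1" by (metis minus_mult_minus mult_cancel_right square_eq_iff)
    then show ?thesis
    proof
      assume h: "y1 = x1" then show ?thesis using s False by auto
    next
      assume h: "y1 = -x1"
      have "x1*(x2+y2) = 0" "x1*(x3+y3) = 0" using s h by (simp_all add: algebra_simps)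
      then show ?thesis using h False by (simp add: eq_neg_iff_add_eq_0)
    qed
  next
    case x1: True
    hence y1: "y1 = 0" using s(1) by simp
    show ?thesis
    proof (cases "x2 = 0")
      case False
      from s(2) have "y2 = x2 \<or> y2 = -x2" by (metis square_eq_iff)
      then show ?thesis
      proof
        assume h: "y2 = x2" then show ?thesis using s False x1 y1 by auto
      next
        assume h: "y2 = -x2"
        have "x2*(x3+y3) = 0" using s h by (simp_all add: algebra_simps)
        then show ?thesis using h False x1 y1 by (simp add: eq_neg_iff_add_eq_0)
      qed
    next
      case x2: True
      hence y2: "y2 = 0" using s(2) by simp
      from s(3) have "y3 = x3 \<or> y3 = -x3" by (metis square_eq_iff)
      then show ?thesis using x1 y1 x2 y2 by auto
    qed
  qed
qed

lemma orth_proj_hyp: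
  fixes v x :: "'a::euclidean_space"
  assumes v: "v \<noteq> 0"
  shows "orth_proj (perp_hyperplane v) x = x - ((x \<bullet> v)/(v \<bullet> v)) *\<^sub>R v"
  unfolding orth_proj_def
proof (rule the_equality)
  have vv: "v \<bullet> v \<noteq> 0" using v by simp
  show "x - ((x \<bullet> v)/(v \<bullet> v)) *\<^sub>R v \<in> perp_hyperplane v \<and>
    (\<forall>w\<in>perp_hyperplane v. (x - (x - ((x \<bullet> v)/(v \<bullet> v)) *\<^sub>R v)) \<bullet> w = 0)"
    using vv by (auto simp: perp_hyperplane_def inner_diff_left inner_diff_right inner_commute)
next
  fix p assume p: "p \<in> perp_hyperplane v \<and> (\<forall>w\<in>perp_hyperplane v. (x - p) \<bullet> w = 0)"
  define q where "q = x - ((x \<bullet> v)/(v \<bullet> v)) *\<^sub>R v"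
  have vv: "v \<bullet> v \<noteq> 0" using v by simp
  have q: "q \<in> perp_hyperplane v" "\<forall>w\<in>perp_hyperplane v. (x - q) \<bullet> w = 0"
    using vv by (auto simp: q_def perp_hyperplane_def inner_diff_left inner_diff_right inner_commute)
  have pq: "p - q \<in> perp_hyperplane v" using p q(1)
    by (auto simp: perp_hyperplane_def inner_diff_left)
  have "(x - p) \<bullet> (p - q) = 0" "(x - q) \<bullet> (p - q) = 0" using p q pq by auto
  hence "(p - q) \<bullet> (p - q) = 0" by (simp add: inner_diff_left inner_diff_right algebra_simps)
  hence "p = q" by simp
  thus "p = x - ((x \<bullet> v)/(v \<bullet> v)) *\<^sub>R v" by (simp add: q_def)
qed

lemma norm_proj_sq:
  fixes v x :: "'a::euclidean_space"
  assumes v: "v \<noteq> 0"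
  shows "(norm (orth_proj (perp_hyperplane v) x))^2 = x \<bullet> x - (x \<bullet> v)^2/(v \<bullet> v)"
proof -
  have vv: "v \<bullet> v \<noteq> 0" using v by simp
  show ?thesis unfolding orth_proj_hyp[OF v] power2_norm_eq_inner
    using vv by (simp add: inner_diff_left inner_diff_right inner_commute power2_eq_square field_simps)
qed

definition phi5 :: "nat \<Rightarrow> real^3" where
  "phi5 i = (if i = 1 then vector [2,1,0] else if i = 2 then vector [2,-1,0]
     else if i = 3 then vector [0,0,1] else if i = 4 then vector [2,1,1] else vector [2,-1,1])"

lemma phi5_nz: "phi5 i \<noteq> 0"
  unfolding phi5_def by (auto simp: vec_eq_iff forall_3)

lemma inner3: "(x::real^3) \<bullet> vector [a,b,c] = x$1*a + x$2*b + x$3*c"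
  by (simp add: inner_vec_def sum_3)

lemma self3: "(x::real^3) \<bullet> x = (x$1)^2 + (x$2)^2 + (x$3)^2"
  by (simp add: inner_vec_def sum_3 power2_eq_square)

theorem mainTheorem6:
  shows "\<exists>\<phi> :: nat \<Rightarrow> real^3.
           (\<forall>i\<in>{1..5}. \<phi> i \<noteq> 0) \<and>
           \<not> vec_phase_retrieval {1..5} \<phi> \<and>
           subspace_phase_retrieval {1..5} (\<lambda>i. perp_hyperplane (\<phi> i))"
proof (intro exI conjI)
  show "\<forall>i\<in>{1..5}. phi5 i \<noteq> 0" using phi5_nz by auto
  show "\<not> vec_phase_retrieval {1..5} phi5"
  proof
    assume a: "vec_phase_retrieval {1..5} phi5"
    let ?x = "vector [1,0,0] :: real^3" and ?y = "vector [0,2,0] :: real^3"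
    have "\<forall>i\<in>{1..5::nat}. \<bar>?x \<bullet> phi5 i\<bar> = \<bar>?y \<bullet> phi5 i\<bar>"
    proof
      fix i :: nat assume "i \<in> {1..5}"
      hence "i = 1 \<or> i = 2 \<or> i = 3 \<or> i = 4 \<or> i = 5" by auto
      thus "\<bar>?x \<bullet> phi5 i\<bar> = \<bar>?y \<bullet> phi5 i\<bar>"
        by (auto simp: phi5_def inner3)
    qed
    with a have "?x = ?y \<or> ?x = - ?y" unfolding vec_phase_retrieval_def by blast
    moreover have "?x $ 1 = 1" "?y $ 1 = 0" by simp_all
    ultimately show False by (auto dest: arg_cong[where f="\<lambda>v. v$1"])
  qed
  show "subspace_phase_retrieval {1..5} (\<lambda>i. perp_hyperplane (phi5 i))"
    unfolding subspace_phase_retrieval_def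
  proof (intro allI impI)
    fix x y :: "real^3"
    assume h: "\<forall>i\<in>{1..5}. norm (orth_proj (perp_hyperplane (phi5 i)) x) =
                             norm (orth_proj (perp_hyperplane (phi5 i)) y)"
    have sq: "x \<bullet> x - (x \<bullet> phi5 i)^2/(phi5 i \<bullet> phi5 i) = y \<bullet> y - (y \<bullet> phi5 i)^2/(phi5 i \<bullet> phi5 i)"
      if "i \<in> {1..5}" for i
      using h that norm_proj_sq[OF phi5_nz, of i x] norm_proj_sq[OF phi5_nz, of i y] by metis
    have pi: "phi5 1 = vector [2,1,0]" "phi5 2 = vector [2,-1,0]" "phi5 3 = vector [0,0,1]"
      "phi5 4 = vector [2,1,1]" "phi5 5 = vector [2,-1,1]" by (simp_all add: phi5_def)
    have e1: "((x$1)^2+(x$2)^2+(x$3)^2) - (2*x$1+x$2)^2/5 = ((y$1)^2+(y$2)^2+(y$3)^2) - (2*y$1+y$2)^2/5"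
      using sq[of 1, unfolded pi(1)] by (simp add: inner3 self3 ac_simps)
    have e2: "((x$1)^2+(x$2)^2+(x$3)^2) - (2*x$1-x$2)^2/5 = ((y$1)^2+(y$2)^2+(y$3)^2) - (2*y$1-y$2)^2/5"
      using sq[of 2, unfolded pi(2)] by (simp add: inner3 self3 ac_simps)
    have e3: "((x$1)^2+(x$2)^2+(x$3)^2) - (x$3)^2 = ((y$1)^2+(y$2)^2+(y$3)^2) - (y$3)^2"
      using sq[of 3, unfolded pi(3)] by (simp add: inner3 self3 ac_simps)
    have e4: "((x$1)^2+(x$2)^2+(x$3)^2) - (2*x$1+x$2+x$3)^2/6 = ((y$1)^2+(y$2)^2+(y$3)^2) - (2*y$1+y$2+y$3)^2/6"
      using sq[of 4, unfolded pi(4)] by (simp add: inner3 self3 ac_simps)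
    have e5: "((x$1)^2+(x$2)^2+(x$3)^2) - (2*x$1-x$2+x$3)^2/6 = ((y$1)^2+(y$2)^2+(y$3)^2) - (2*y$1-y$2+y$3)^2/6"
      using sq[of 5, unfolded pi(5)] by (simp add: inner3 self3 ac_simps)
    from core[OF e3 e1 e2 e4 e5] show "x = y \<or> x = - y"
      by (auto simp: vec_eq_iff forall_3)
  qed
qed

end
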